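(* Let $A$ be a unital C$^*$-algebra, $H$ a Hilbert space, and let $\Phi : A \to B(H)$ be a unital $*$-homomorphism. Then $\Phi$ is an operational extreme point of the operational convex hull $S$ of the completely positive maps of $A$ into $B(H)$. That is: whenever $\Phi = \sum_{i=1}^m {\rm Ad}\, a_i \circ \Psi_i$ with $\Psi_1,\dots,\Psi_m \in S$ and $\{a_1,\dots,a_m\}$ a finite operational partition of unity in $B(H)$, there exist $z_1,\dots,z_m \in \Phi(A)'$ such that ${\rm Ad}\, a_i \circ \Psi_i = z_i \Phi$ for every $i$.
   Context: For an operator $v$, ${\rm Ad}\, v$ denotes the map $x \mapsto v x v^*$. A finite operational partition of unity of size $m$ in a unital C$^*$-algebra $B$ is a finite set $\{a_1,\dots,a_m\}$ of non-zero elements of $B$ with $\sum_{i=1}^m a_i a_i^* = 1_B$; the set of these is denoted $FOP_m(B)$. For linear maps $\Psi_1,\dots,\Psi_m$ and $\{a_i\}\in FOP_m(B)$, the map $\sum_{i=1}^m {\rm Ad}\, a_i \circ \Psi_i$ is called an operational convex combination of the $\Psi_i$; a set of linear maps is operational convex if it is closed under all operational convex combinations, and the operational convex hull of a set is the smallest operational convex set containing it. If $S$ is an operational convex set of positive linear maps from $A$ into a unital C$^*$-subalgebra $B$ of $B(H)$, a map $\Phi \in S$ is an operational extreme point of $S$ if whenever $\Phi = \sum_{i=1}^m {\rm Ad}\, a_i \circ \Psi_i$ with $\{\Psi_i\}\subset S$ and $\{a_i\} \in FOP_m(B)$, one has ${\rm Ad}\, a_i \circ \Psi_i = z_i \Phi$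 for some $z_i \in \Phi(A)' = \{z \in B(H) : zy = yz \ \forall y \in \Phi(A)\}$, for all $i$. Here $B = B(H)$. A map $\Phi$ is completely positive if $\Phi\otimes 1_k$ is positive on $A\otimes M_k(\mathbb{C})$ for all $k$. *)

theory Defs
  imports Complex_Main
begin

class complex_vector_sp = ab_group_add +
  fixes scaleC :: "complex \<Rightarrow> 'a \<Rightarrow> 'a" (infixr "*\<^sub>C" 75)
  assumes scaleC_add_right: "c *\<^sub>C (x + y) = c *\<^sub>C x + c *\<^sub>C y"
    and scaleC_add_left: "(c + d) *\<^sub>C x = c *\<^sub>C x + d *\<^sub>C x"
    and scaleC_scaleC: "c *\<^sub>C (d *\<^sub>C x) = (c * d) *\<^sub>C x"
    and scaleC_one: "1 *\<^sub>C x = x"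

class chilbert = complex_vector_sp +
  fixes cinner :: "'a \<Rightarrow> 'a \<Rightarrow> complex"
  assumes cinner_conj_sym: "cinner x y = cnj (cinner y x)"
    and cinner_add_right: "cinner x (y + z) = cinner x y + cinner x z"
    and cinner_scaleC_right: "cinner x (c *\<^sub>C y) = c * cinner x y"
    and cinner_self_real: "Im (cinner x x) = 0"
    and cinner_self_nonneg: "0 \<le> Re (cinner x x)"
    and cinner_self_zero: "cinner x x = 0 \<Longrightarrow> x = 0"
    and hilbert_complete:
      "(\<forall>e>0. \<exists>N::nat. \<forall>m\<ge>N. \<forall>n\<ge>N. sqrt (Re (cinner (X m - X n) (X m - X n))) < e)
        \<Longrightarrow> (\<exists>L. \<forall>e>0. \<exists>N::nat. \<forall>n\<ge>N. sqrt (Re (cinner (X n - L) (X n - L))) < e)"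

definition hnorm :: "'h::chilbert \<Rightarrow> real" where
  "hnorm x = sqrt (Re (cinner x x))"

class cstar_algebra = ring_1 + complex_vector_sp +
  fixes cstar :: "'a \<Rightarrow> 'a"
    and cnorm :: "'a \<Rightarrow> real"
  assumes scaleC_mult_left: "(c *\<^sub>C x) * y = c *\<^sub>C (x * y)"
    and scaleC_mult_right: "x * (c *\<^sub>C y) = c *\<^sub>C (x * y)"
    and cstar_cstar: "cstar (cstar x) = x"
    and cstar_add: "cstar (x + y) = cstar x + cstar y"
    and cstar_mult: "cstar (x * y) = cstar y * cstar x"
    and cstar_scaleC: "cstar (c *\<^sub>C x) = cnj c *\<^sub>C cstar x"
    and norm_triangle: "cnorm (x + y) \<le> cnorm x + cnorm y"
    and norm_scaleC: "cnorm (c *\<^sub>C x) = cmod c * cnorm x"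
    and norm_zero_iff: "cnorm x = 0 \<longleftrightarrow> x = 0"
    and norm_submult: "cnorm (x * y) \<le> cnorm x * cnorm y"
    and cstar_identity: "cnorm (cstar x * x) = cnorm x ^ 2"
    and banach_complete:
      "(\<forall>e>0. \<exists>N::nat. \<forall>m\<ge>N. \<forall>n\<ge>N. cnorm (X m - X n) < e)
        \<Longrightarrow> (\<exists>L. \<forall>e>0. \<exists>N::nat. \<forall>n\<ge>N. cnorm (X n - L) < e)"

text \<open>Operators on H are functions; B(H) is the set of bounded complex-linear ones,
with product = composition, unit = id.\<close>
definition BH :: "('h::chilbert \<Rightarrow> 'h) set" where
  "BH = {T. (\<forall>x y. T (x + y) = T x + T y) \<and> (\<forall>c x. T (c *\<^sub>C x) = c *\<^sub>C T x)
            \<and> (\<exists>K. \<forall>x. hnorm (T x) \<le> K * hnorm x)}"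

definition adj :: "('h::chilbert \<Rightarrow> 'h) \<Rightarrow> ('h \<Rightarrow> 'h)" where
  "adj T = (SOME S. S \<in> BH \<and> (\<forall>x y. cinner (T x) y = cinner x (S y)))"

definition Ad :: "('h::chilbert \<Rightarrow> 'h) \<Rightarrow> ('h \<Rightarrow> 'h) \<Rightarrow> ('h \<Rightarrow> 'h)" where
  "Ad v x = v \<circ> x \<circ> adj v"

text \<open>Finite operational partition of unity of size m in B(H), indexed as a_0..a_(m-1):
distinct (it is a set of m elements), non-zero elements with sum a_i a_i^* = 1.\<close>
definition FOP :: "nat \<Rightarrow> (nat \<Rightarrow> ('h::chilbert \<Rightarrow> 'h)) set" where
  "FOP m = {a. inj_on a {..<m} \<and> (\<forall>i<m. a i \<in> BH \<and> a i \<noteq> (\<lambda>_. 0))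
               \<and> (\<lambda>h. \<Sum>i<m. (a i \<circ> adj (a i)) h) = id}"

text \<open>k x k matrices over A (entries indexed by i,j < k); positivity in the C*-algebra
M_k(A) means X = Y^* Y.\<close>
definition pos_matA :: "nat \<Rightarrow> (nat \<Rightarrow> nat \<Rightarrow> 'a::cstar_algebra) \<Rightarrow> bool" where
  "pos_matA k X \<longleftrightarrow> (\<exists>Y. \<forall>i<k. \<forall>j<k. X i j = (\<Sum>l<k. cstar (Y l i) * Y l j))"

text \<open>Positivity in M_k(B(H)) = B(H^k): the operator is positive on H^k.\<close>
definition pos_matB :: "nat \<Rightarrow> (nat \<Rightarrow> nat \<Rightarrow> ('h::chilbert \<Rightarrow> 'h)) \<Rightarrow> bool" where
  "pos_matB k T \<longleftrightarrow> (\<forall>\<xi>::nat \<Rightarrow> 'h.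
      Im (\<Sum>i<k. \<Sum>j<k. cinner (\<xi> i) (T i j (\<xi> j))) = 0 \<and>
      0 \<le> Re (\<Sum>i<k. \<Sum>j<k. cinner (\<xi> i) (T i j (\<xi> j))))"

definition linear_map_BH :: "('a::cstar_algebra \<Rightarrow> ('h::chilbert \<Rightarrow> 'h)) \<Rightarrow> bool" where
  "linear_map_BH \<Psi> \<longleftrightarrow> (\<forall>x. \<Psi> x \<in> BH)
     \<and> (\<forall>x y. \<Psi> (x + y) = (\<lambda>h. \<Psi> x h + \<Psi> y h))
     \<and> (\<forall>c x. \<Psi> (c *\<^sub>C x) = (\<lambda>h. c *\<^sub>C \<Psi> x h))"

definition completely_positive :: "('a::cstar_algebra \<Rightarrow> ('h::chilbert \<Rightarrow> 'h)) \<Rightarrow> bool" where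
  "completely_positive \<Psi> \<longleftrightarrow> linear_map_BH \<Psi> \<and>
     (\<forall>k X. pos_matA k X \<longrightarrow> pos_matB k (\<lambda>i j. \<Psi> (X i j)))"

definition CP_maps :: "('a::cstar_algebra \<Rightarrow> ('h::chilbert \<Rightarrow> 'h)) set" where
  "CP_maps = {\<Psi>. completely_positive \<Psi>}"

definition op_comb :: "nat \<Rightarrow> (nat \<Rightarrow> ('h::chilbert \<Rightarrow> 'h)) \<Rightarrow> (nat \<Rightarrow> ('a \<Rightarrow> ('h \<Rightarrow> 'h)))
                        \<Rightarrow> ('a \<Rightarrow> ('h \<Rightarrow> 'h))" where
  "op_comb m a \<Psi> = (\<lambda>x h. \<Sum>i<m. Ad (a i) (\<Psi> i x) h)"

definition op_convex :: "('a \<Rightarrow> ('h::chilbert \<Rightarrow> 'h)) set \<Rightarrow> bool" where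
  "op_convex S \<longleftrightarrow> (\<forall>m a \<Psi>. a \<in> FOP m \<and> (\<forall>i<m. \<Psi> i \<in> S) \<longrightarrow> op_comb m a \<Psi> \<in> S)"

definition op_convex_hull :: "('a \<Rightarrow> ('h::chilbert \<Rightarrow> 'h)) set \<Rightarrow> ('a \<Rightarrow> ('h \<Rightarrow> 'h)) set" where
  "op_convex_hull S = \<Inter>{T. S \<subseteq> T \<and> op_convex T}"

definition commutant_range :: "('a \<Rightarrow> ('h::chilbert \<Rightarrow> 'h)) \<Rightarrow> ('h \<Rightarrow> 'h) set" where
  "commutant_range \<Phi> = {z \<in> BH. \<forall>x. z \<circ> \<Phi> x = \<Phi> x \<circ> z}"

definition op_extreme :: "('a \<Rightarrow> ('h::chilbert \<Rightarrow> 'h)) set \<Rightarrow> ('a \<Rightarrow> ('h \<Rightarrow> 'h)) \<Rightarrow> bool" where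
  "op_extreme S \<Phi> \<longleftrightarrow> \<Phi> \<in> S \<and>
     (\<forall>m a \<Psi>. a \<in> FOP m \<and> (\<forall>i<m. \<Psi> i \<in> S) \<and> \<Phi> = op_comb m a \<Psi> \<longrightarrow>
        (\<exists>z. \<forall>i<m. z i \<in> commutant_range \<Phi> \<and>
               (\<lambda>x. Ad (a i) (\<Psi> i x)) = (\<lambda>x. z i \<circ> \<Phi> x)))"

definition unital_star_hom :: "('a::cstar_algebra \<Rightarrow> ('h::chilbert \<Rightarrow> 'h)) \<Rightarrow> bool" where
  "unital_star_hom \<Phi> \<longleftrightarrow> linear_map_BH \<Phi>
     \<and> (\<forall>x y. \<Phi> (x * y) = \<Phi> x \<circ> \<Phi> y)
     \<and> (\<forall>x. \<Phi> (cstar x) = adj (\<Phi> x))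
     \<and> \<Phi> 1 = id"

end

theory Submission
  imports Defs
begin


lemma scaleC_zero_left[simp]: "(0::complex) *\<^sub>C (x::'a::complex_vector_sp) = 0"
proof -
  have "0 *\<^sub>C x = (0 + 0) *\<^sub>C x" by simp
  then have "0 *\<^sub>C x = 0 *\<^sub>C x + 0 *\<^sub>C x" by (simp only: scaleC_add_left)
  then show ?thesis using add_cancel_right_right by blast
qed

lemma scaleC_zero_right[simp]: "c *\<^sub>C (0::'a::complex_vector_sp) = 0"
proof -
  have "c *\<^sub>C (0::'a) = c *\<^sub>C (0 + 0)" by simp
  then have "c *\<^sub>C (0::'a) = c *\<^sub>C 0 + c *\<^sub>C 0" by (simp only: scaleC_add_right)
  then show ?thesis using add_cancel_right_right by blast
qed

lemma scaleC_minus_right: "c *\<^sub>C (- (x::'a::complex_vector_sp)) = - (c *\<^sub>C x)"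
proof -
  have "c *\<^sub>C (- x) + c *\<^sub>C x = 0" by (simp flip: scaleC_add_right)
  then show ?thesis by (simp add: eq_neg_iff_add_eq_0)
qed

lemma scaleC_minus_left: "(- c) *\<^sub>C (x::'a::complex_vector_sp) = - (c *\<^sub>C x)"
proof -
  have "(- c) *\<^sub>C x + c *\<^sub>C x = 0" by (simp flip: scaleC_add_left)
  then show ?thesis by (simp add: eq_neg_iff_add_eq_0)
qed

lemma scaleC_diff_right: "c *\<^sub>C ((x::'a::complex_vector_sp) - y) = c *\<^sub>C x - c *\<^sub>C y"
  by (simp only: diff_conv_add_uminus scaleC_add_right scaleC_minus_right)

lemma scaleC_diff_left: "(c - d) *\<^sub>C (x::'a::complex_vector_sp) = c *\<^sub>C x - d *\<^sub>C x"
  by (simp only: diff_conv_add_uminus scaleC_add_left scaleC_minus_left)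

lemma scaleC_sum: "c *\<^sub>C (\<Sum>i\<in>I. f i) = (\<Sum>i\<in>I. c *\<^sub>C (f i::'a::complex_vector_sp))"
  by (induction I rule: infinite_finite_induct) (auto simp: scaleC_add_right)

lemma minus_one_scaleC: "(-1) *\<^sub>C (x::'a::complex_vector_sp) = - x"
  by (simp add: scaleC_minus_left scaleC_one)

lemma cinner_add_left: "cinner (x + y) (z::'a::chilbert) = cinner x z + cinner y z"
  by (metis cinner_conj_sym cinner_add_right complex_cnj_add)

lemma cinner_scaleC_left: "cinner (c *\<^sub>C x) (y::'a::chilbert) = cnj c * cinner x y"
  by (metis cinner_conj_sym cinner_scaleC_right complex_cnj_mult)

lemma cinner_zero_right[simp]: "cinner x (0::'a::chilbert) = 0"
  by (metis add_0 add_cancel_right_right cinner_add_right)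

lemma cinner_zero_left[simp]: "cinner (0::'a::chilbert) x = 0"
  by (metis cinner_conj_sym cinner_zero_right complex_cnj_zero)

lemma cinner_minus_right: "cinner x (- (y::'a::chilbert)) = - cinner x y"
  by (metis add.right_inverse cinner_add_right cinner_zero_right eq_neg_iff_add_eq_0)

lemma cinner_minus_left: "cinner (- x) (y::'a::chilbert) = - cinner x y"
  by (metis cinner_conj_sym cinner_minus_right complex_cnj_minus)

lemma cinner_diff_right: "cinner x ((y::'a::chilbert) - z) = cinner x y - cinner x z"
  by (simp only: diff_conv_add_uminus cinner_add_right cinner_minus_right)

lemma cinner_diff_left: "cinner ((x::'a::chilbert) - y) z = cinner x z - cinner y z"
  by (simp only: diff_conv_add_uminus cinner_add_left cinner_minus_left)

lemma cinner_sum_right: "cinner x (\<Sum>i\<in>I. f i) = (\<Sum>i\<in>I. cinner (x::'a::chilbert) (f i))"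
  by (induction I rule: infinite_finite_induct) (auto simp: cinner_add_right)

lemma cinner_sum_left: "cinner (\<Sum>i\<in>I. f i) x = (\<Sum>i\<in>I. cinner (f i) (x::'a::chilbert))"
  by (induction I rule: infinite_finite_induct) (auto simp: cinner_add_left)

lemma cinner_self_eq: "cinner x (x::'a::chilbert) = complex_of_real (Re (cinner x x))"
  using cinner_self_real[of x] by (simp add: complex_eq_iff)

lemma cinner_ext_right: "(\<And>z. cinner z x = cinner z (y::'a::chilbert)) \<Longrightarrow> x = y"
proof -
  assume h: "\<And>z. cinner z x = cinner z y"
  have "cinner (x - y) (x - y) = 0" by (simp add: cinner_diff_right h)
  then show ?thesis using cinner_self_zero by fastforce
qed

lemma cinner_ext_left: "(\<And>z. cinner x z = cinner (y::'a::chilbert) z) \<Longrightarrow> x = y"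
  by (metis cinner_conj_sym cinner_ext_right)

definition nsq :: "'a::chilbert \<Rightarrow> real" where "nsq x = Re (cinner x x)"

lemma nsq_nonneg: "0 \<le> nsq x" by (simp add: nsq_def cinner_self_nonneg)
lemma hnorm_nonneg: "0 \<le> hnorm x" by (simp add: hnorm_def cinner_self_nonneg)
lemma hnorm_sq: "hnorm x ^ 2 = nsq x" by (simp add: hnorm_def nsq_def cinner_self_nonneg)
lemma hnorm_nsq: "hnorm x = sqrt (nsq x)" by (simp add: hnorm_def nsq_def)

lemma nsq_expand: "nsq (x + c *\<^sub>C y) = nsq x + 2 * Re (c * cinner x y) + (cmod c)^2 * nsq (y::'a::chilbert)"
proof -
  have "cinner (x + c *\<^sub>C y) (x + c *\<^sub>C y) = cinner x x + c * cinner x y + cnj c * cinner y x + cnj c * c * cinner y y"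
    by (simp add: cinner_add_left cinner_add_right cinner_scaleC_left cinner_scaleC_right algebra_simps)
  moreover have "cnj c * cinner y x = cnj (c * cinner x y)" by (metis cinner_conj_sym complex_cnj_mult)
  moreover have "cnj c * c = complex_of_real ((cmod c)^2)" using complex_norm_square[of c] by (simp add: mult.commute)
  ultimately have "nsq (x + c *\<^sub>C y) = Re (cinner x x) + Re (c * cinner x y) + Re (c * cinner x y) + (cmod c)^2 * Re (cinner y y)"
    unfolding nsq_def by simp
  then show ?thesis by (simp add: nsq_def)
qed

lemma quad_zero:
  fixes a b :: real
  assumes "\<And>s. 0 < s \<Longrightarrow> 0 \<le> a - 2 * s * B + s^2 * B * c" "0 \<le> B" "0 \<le> c"
  shows "B \<le> a * c"
proof (cases "c = 0")
  case True
  show ?thesis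
  proof (rule ccontr)
    assume "\<not> B \<le> a * c"
    then have B: "B > 0" using True by simp
    have "0 \<le> a - 2 * 1 * B + 1^2 * B * c" using assms(1)[of "1"] by simp
    then have "0 \<le> a" using assms(2) True by simp
    have s: "(a+1)/B > 0" using B \<open>0 \<le> a\<close> by simp
    have "0 \<le> a - 2*((a+1)/B)*B + ((a+1)/B)^2*B*c" by (rule assms(1)[OF s])
    then have "0 \<le> a - 2*(a+1)" using True B by simp
    then show False using \<open>0 \<le> a\<close> by (simp add: algebra_simps)
  qed
next
  case False
  then have c: "c > 0" using assms(3) by simp
  have "0 \<le> a - 2 * (1/c) * B + (1/c)^2 * B * c" using assms(1)[of "1/c"] c by simp
  moreover have "(1/c)^2 * B * c = B / c" using c by (simp add: power2_eq_square field_simps)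
  moreover have "2 * (1/c) * B = 2 * (B / c)" by simp
  ultimately have "0 \<le> a - B / c" by linarith
  then show ?thesis using c by (simp add: field_simps)
qed

lemma Re_neg_cnj_mult: "Re (- (complex_of_real s * cnj b) * b) = - s * (cmod b)^2"
proof -
  have h: "cnj b * b = complex_of_real ((cmod b)^2)" using complex_norm_square[of b] by (simp add: mult.commute)
  have "- (complex_of_real s * cnj b) * b = - (complex_of_real s * (cnj b * b))" by (simp add: mult.assoc)
  also have "\<dots> = complex_of_real (- s * (cmod b)^2)" unfolding h by simp
  finally have e: "- (complex_of_real s * cnj b) * b = complex_of_real (- s * (cmod b)^2)" .
  show ?thesis unfolding e by (simp only: Re_complex_of_real)
qed

lemma cauchy_schwarz: "(cmod (cinner x y))^2 \<le> nsq x * nsq (y::'a::chilbert)"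
proof -
  let ?b = "cinner x y"
  have "0 \<le> nsq x - 2 * s * (cmod ?b)^2 + s^2 * (cmod ?b)^2 * nsq y" if "0 < s" for s
  proof -
    have "0 \<le> nsq (x + (- (complex_of_real s * cnj ?b)) *\<^sub>C y)" by (rule nsq_nonneg)
    also have "\<dots> = nsq x + 2 * Re (- (complex_of_real s * cnj ?b) * ?b) + (cmod (- (complex_of_real s * cnj ?b)))^2 * nsq y"
      by (rule nsq_expand)
    also have "Re (- (complex_of_real s * cnj ?b) * ?b) = - s * (cmod ?b)^2"
      by (rule Re_neg_cnj_mult)
    also have "(cmod (- (complex_of_real s * cnj ?b)))^2 = s^2 * (cmod ?b)^2"
      by (simp add: norm_mult power_mult_distrib)
    finally show ?thesis by (simp add: algebra_simps)
  qed
  from quad_zero[OF this _ nsq_nonneg] show ?thesis by (simp add: mult.commute)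
qed

lemma cinner_bound: "cmod (cinner x y) \<le> hnorm x * hnorm (y::'a::chilbert)"
proof -
  have "(cmod (cinner x y))^2 \<le> (hnorm x * hnorm y)^2"
    using cauchy_schwarz[of x y] by (simp add: power_mult_distrib hnorm_sq)
  then show ?thesis by (meson hnorm_nonneg mult_nonneg_nonneg power2_le_imp_le)
qed

lemma hnorm_triangle: "hnorm (x + y) \<le> hnorm x + hnorm (y::'a::chilbert)"
proof -
  have "nsq (x + y) = nsq x + 2 * Re (cinner x y) + nsq y"
    using nsq_expand[of x 1 y] by (simp add: scaleC_one)
  also have "Re (cinner x y) \<le> hnorm x * hnorm y"
    using cinner_bound[of x y] complex_Re_le_cmod order_trans by blast
  finally have "(hnorm (x+y))^2 \<le> (hnorm x + hnorm y)^2"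
    by (simp add: hnorm_sq power2_sum)
  then show ?thesis by (meson add_nonneg_nonneg hnorm_nonneg power2_le_imp_le)
qed

lemma hnorm_scaleC: "hnorm (c *\<^sub>C x) = cmod c * hnorm (x::'a::chilbert)"
proof -
  have "nsq (c *\<^sub>C x) = (cmod c)^2 * nsq x"
    using nsq_expand[of 0 c x] by (simp add: nsq_def)
  then show ?thesis by (simp add: hnorm_nsq real_sqrt_mult)
qed

lemma hnorm_minus: "hnorm (- x) = hnorm (x::'a::chilbert)"
  using hnorm_scaleC[of "-1" x] by (simp add: minus_one_scaleC)

lemma hnorm_zero_iff: "hnorm x = 0 \<longleftrightarrow> x = (0::'a::chilbert)"
  by (metis cinner_self_eq cinner_self_zero cinner_zero_left hnorm_def real_sqrt_eq_zero_cancel_iff zero_complex.simps(1))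



lemma BH_add: "T \<in> BH \<Longrightarrow> T (x + y) = T x + T y" by (simp add: BH_def)
lemma BH_scale: "T \<in> BH \<Longrightarrow> T (c *\<^sub>C x) = c *\<^sub>C T x" by (simp add: BH_def)
lemma BH_zero: "T \<in> BH \<Longrightarrow> T 0 = 0"
  by (metis BH_scale scaleC_zero_left)
lemma BH_minus: "T \<in> BH \<Longrightarrow> T (- x) = - T x"
  by (metis BH_scale minus_one_scaleC)
lemma BH_diff: "T \<in> BH \<Longrightarrow> T (x - y) = T x - T y"
  by (simp only: BH_add BH_minus diff_conv_add_uminus)
lemma BH_sum: "T \<in> BH \<Longrightarrow> T (\<Sum>i\<in>I. f i) = (\<Sum>i\<in>I. T (f i))"
  by (induction I rule: infinite_finite_induct) (auto simp: BH_add BH_zero)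

lemma BH_bound: "T \<in> BH \<Longrightarrow> \<exists>K\<ge>0. \<forall>x. hnorm (T x) \<le> K * hnorm x"
proof -
  assume "T \<in> BH"
  then obtain K where K: "\<forall>x. hnorm (T x) \<le> K * hnorm x" by (auto simp: BH_def)
  have "hnorm (T x) \<le> max K 0 * hnorm x" for x
    using K[rule_format, of x] hnorm_nonneg[of x]
    by (meson max.cobounded1 mult_right_mono order_trans)
  then show ?thesis by (metis max.cobounded2)
qed

lemma BH_comp: "S \<in> BH \<Longrightarrow> T \<in> BH \<Longrightarrow> S \<circ> T \<in> BH"
proof -
  assume S: "S \<in> BH" and T: "T \<in> BH"
  obtain K where K: "K \<ge> 0" "\<forall>x. hnorm (S x) \<le> K * hnorm x" using BH_bound[OF S] by blast
  obtain L where L: "L \<ge> 0" "\<forall>x. hnorm (T x) \<le> L * hnorm x" using BH_bound[OF T] by blast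
  have "hnorm (S (T x)) \<le> (K * L) * hnorm x" for x
  proof -
    have "hnorm (S (T x)) \<le> K * hnorm (T x)" using K by blast
    also have "\<dots> \<le> K * (L * hnorm x)" using L K mult_left_mono by blast
    finally show ?thesis by (simp add: mult.assoc)
  qed
  then have "\<exists>K. \<forall>x. hnorm ((S \<circ> T) x) \<le> K * hnorm x" by auto
  moreover have "\<forall>x y. (S \<circ> T) (x + y) = (S \<circ> T) x + (S \<circ> T) y" using S T by (simp add: BH_add)
  moreover have "\<forall>c x. (S \<circ> T) (c *\<^sub>C x) = c *\<^sub>C (S \<circ> T) x" using S T by (simp add: BH_scale)
  ultimately show ?thesis unfolding BH_def by blast
qed

lemma BH_zero_fun: "(\<lambda>_. 0::'a::chilbert) \<in> BH"
proof -
  have "hnorm (0::'a) = 0" by (simp add: hnorm_zero_iff)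
  then show ?thesis unfolding BH_def by (auto intro: exI[of _ 0])
qed

lemma BH_add_fun: "S \<in> BH \<Longrightarrow> T \<in> BH \<Longrightarrow> (\<lambda>h. S h + T h) \<in> BH"
proof -
  assume S: "S \<in> BH" and T: "T \<in> BH"
  obtain K where K: "K \<ge> 0" "\<forall>x. hnorm (S x) \<le> K * hnorm x" using BH_bound[OF S] by blast
  obtain L where L: "L \<ge> 0" "\<forall>x. hnorm (T x) \<le> L * hnorm x" using BH_bound[OF T] by blast
  have "hnorm (S x + T x) \<le> (K + L) * hnorm x" for x
    using hnorm_triangle[of "S x" "T x"] K L by (smt (verit, best) distrib_right)
  then have "\<exists>K. \<forall>x. hnorm (S x + T x) \<le> K * hnorm x" by auto
  moreover have "\<forall>x y. S (x + y) + T (x + y) = (S x + T x) + (S y + T y)" using S T by (simp add: BH_add algebra_simps)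
  moreover have "\<forall>c x. S (c *\<^sub>C x) + T (c *\<^sub>C x) = c *\<^sub>C (S x + T x)" using S T by (simp add: BH_scale scaleC_add_right)
  ultimately show ?thesis unfolding BH_def by blast
qed

lemma BH_sum_fun: "(\<And>i. i \<in> I \<Longrightarrow> T i \<in> BH) \<Longrightarrow> (\<lambda>h. \<Sum>i\<in>I. T i h) \<in> BH"
proof (induction I rule: infinite_finite_induct)
  case (infinite A) then show ?case by (simp add: BH_zero_fun)
next
  case empty then show ?case by (simp add: BH_zero_fun)
next
  case (insert x F)
  then show ?case by (simp add: BH_add_fun)
qed

lemma BH_id: "id \<in> BH"
  unfolding BH_def by (auto intro: exI[of _ 1])

section \<open>Riesz\<close>

lemma parallelogram: "nsq (x - y) = 2 * nsq x + 2 * nsq y - nsq (x + (y::'a::chilbert))"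
proof -
  have e: "x - y = x + (-1) *\<^sub>C y" by (simp add: minus_one_scaleC)
  show ?thesis using nsq_expand[of x 1 y] nsq_expand[of x "-1" y] unfolding e[symmetric]
    by (simp add: scaleC_one)
qed

lemma riesz:
  fixes g :: "'a::chilbert \<Rightarrow> complex"
  assumes add: "\<And>x y. g (x + y) = g x + g y"
    and scal: "\<And>c x. g (c *\<^sub>C x) = c * g x"
    and bnd: "\<And>x. cmod (g x) \<le> C * hnorm x"
  shows "\<exists>v. \<forall>x. g x = cinner v x"
proof (cases "\<forall>x. g x = 0")
  case True
  then show ?thesis by (intro exI[of _ 0]) simp
next
  case False
  then obtain x0 where x0: "g x0 \<noteq> 0" by blast
  have g0: "g 0 = 0" using scal[of 0 0] by simp
  have gminus: "g (- x) = - g x" for x using scal[of "-1" x] by (simp add: minus_one_scaleC)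
  have gdiff: "g (x - y) = g x - g y" for x y by (simp only: diff_conv_add_uminus add gminus)
  define M where "M = {nsq u | u. g u = 1}"
  define d where "d = Inf M"
  have u1: "g ((1 / g x0) *\<^sub>C x0) = 1" using x0 by (simp add: scal)
  have Mne: "M \<noteq> {}" using u1 unfolding M_def by blast
  have Mbdd: "bdd_below M" unfolding M_def by (rule bdd_belowI[of _ 0]) (auto simp: nsq_nonneg)
  have dle: "d \<le> nsq u" if "g u = 1" for u
    unfolding d_def M_def by (rule cInf_lower) (use that Mbdd in \<open>auto simp: M_def\<close>)
  have d0: "0 \<le> d" unfolding d_def using Mne by (rule cInf_greatest) (auto simp: M_def nsq_nonneg)
  have "\<exists>u. g u = 1 \<and> nsq u < d + 1 / (real n + 1)" for n
  proof -
    have "Inf M < d + 1 / (real n + 1)" unfolding d_def by simp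
    then obtain r where "r \<in> M" "r < d + 1/(real n + 1)" using cInf_lessD[OF Mne] by blast
    then show ?thesis unfolding M_def by blast
  qed
  then obtain u where u: "\<And>n. g (u n) = 1" "\<And>n. nsq (u n) < d + 1 / (real n + 1)" by metis
  have cauchy_bd: "nsq (u m - u n) \<le> 2 / (real m + 1) + 2 / (real n + 1)" for m n
  proof -
    have "g ((1/2) *\<^sub>C (u m + u n)) = 1" by (simp add: scal add u)
    then have "d \<le> nsq ((1/2) *\<^sub>C (u m + u n))" by (rule dle)
    also have "\<dots> = nsq (u m + u n) / 4"
      using nsq_expand[of 0 "1/2" "u m + u n"] by (simp add: nsq_def power2_eq_square)
    finally have "4 * d \<le> nsq (u m + u n)" by simp
    then show ?thesis using parallelogram[of "u m" "u n"] u(2)[of m] u(2)[of n] by linarith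
  qed
  have "\<exists>N::nat. \<forall>m\<ge>N. \<forall>n\<ge>N. hnorm (u m - u n) < e" if "e > 0" for e
  proof -
    obtain N :: nat where N: "4 / e^2 < real N" using reals_Archimedean2 by blast
    have "hnorm (u m - u n) < e" if "m \<ge> N" "n \<ge> N" for m n
    proof -
      have "2 / (real m + 1) \<le> 2 / (real N + 1)" using that by (simp add: frac_le)
      moreover have "2 / (real n + 1) \<le> 2 / (real N + 1)" using that by (simp add: frac_le)
      moreover have "4 / (real N + 1) < e^2"
      proof -
        have e2: "e^2 > 0" using \<open>e > 0\<close> by simp
        have "4 < real N * e^2" using N e2 by (simp add: divide_less_eq)
        also have "\<dots> \<le> (real N + 1) * e^2" using e2 by simp
        finally show ?thesis by (simp add: divide_less_eq mult.commute)
      qed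
      ultimately have "nsq (u m - u n) < e^2" using cauchy_bd[of m n] by linarith
      then have "sqrt (nsq (u m - u n)) < sqrt (e^2)" using real_sqrt_less_mono by blast
      then show ?thesis using \<open>e > 0\<close> by (simp add: hnorm_nsq)
    qed
    then show ?thesis by blast
  qed
  then obtain L where L: "\<And>e. e > 0 \<Longrightarrow> \<exists>N::nat. \<forall>n\<ge>N. hnorm (u n - L) < e"
    using hilbert_complete[of u] unfolding hnorm_def by blast
  have "0 < C * hnorm x0" using bnd[of x0] x0 by (meson less_le_trans zero_less_norm_iff)
  then have C0: "0 \<le> C" using hnorm_nonneg[of x0] by (auto simp: zero_less_mult_iff)
  have gL: "g L = 1"
  proof (rule ccontr)
    assume ne: "g L \<noteq> 1"
    define e where "e = cmod (g L - 1) / (C + 1)"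
    have e: "e > 0" using ne C0 by (simp add: e_def)
    obtain n where "hnorm (u n - L) < e" using L[OF e] by blast
    then have "C * hnorm (u n - L) \<le> C * e" using C0 by (simp add: mult_left_mono)
    moreover have "C * e < cmod (g L - 1)"
    proof -
      have p: "cmod (g L - 1) > 0" using ne by simp
      have "C * e = cmod (g L - 1) * (C / (C + 1))" by (simp add: e_def)
      also have "\<dots> < cmod (g L - 1) * 1" using p C0 by (intro mult_strict_left_mono) auto
      finally show ?thesis by simp
    qed
    ultimately have "cmod (g (u n - L)) < cmod (g L - 1)" using bnd[of "u n - L"] by linarith
    then show False by (simp add: gdiff u norm_minus_commute)
  qed
  have Lle: "hnorm L \<le> sqrt d"
  proof (rule ccontr)
    assume "\<not> hnorm L \<le> sqrt d"
    then have del: "hnorm L - sqrt d > 0" by simp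
    define e where "e = (hnorm L - sqrt d) / 2"
    have e: "e > 0" using del by (simp add: e_def)
    obtain N where N: "\<forall>n\<ge>N. hnorm (u n - L) < e" using L[OF e] by blast
    obtain n0 :: nat where n0: "1 / e^2 < real n0" using reals_Archimedean2 by blast
    define n where "n = max N n0"
    have "hnorm (u n - L) < e" using N n_def by simp
    moreover have "hnorm L \<le> hnorm (u n) + hnorm (L - u n)"
      using hnorm_triangle[of "u n" "L - u n"] by simp
    moreover have "hnorm (L - u n) = hnorm (u n - L)" by (metis hnorm_minus minus_diff_eq)
    moreover have "hnorm (u n) < sqrt d + e"
    proof -
      have "1 / (real n + 1) < e^2"
      proof -
        have "real n0 \<le> real n" by (simp add: n_def)
        then have "1/e^2 < real n + 1" using n0 by linarith
        then show ?thesis using e by (simp add: field_simps)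
      qed
      then have "nsq (u n) < d + e^2" using u(2)[of n] by linarith
      also have "\<dots> \<le> (sqrt d + e)^2" using d0 e by (simp add: power2_sum)
      finally have "sqrt (nsq (u n)) < sqrt ((sqrt d + e)^2)" using real_sqrt_less_mono by blast
      then show ?thesis using e d0 by (simp add: hnorm_nsq)
    qed
    moreover have "2 * e = hnorm L - sqrt d" by (simp add: e_def)
    ultimately show False by linarith
  qed
  have orth: "cinner L k = 0" if "g k = 0" for k
  proof -
    let ?b = "cinner L k"
    have "0 \<le> - 2 * s * (cmod ?b)^2 + s^2 * (cmod ?b)^2 * nsq k" if "s > 0" for s
    proof -
      let ?c = "- (complex_of_real s * cnj ?b)"
      have "g (L + ?c *\<^sub>C k) = 1" by (simp add: add scal gL \<open>g k = 0\<close>)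
      then have "d \<le> nsq (L + ?c *\<^sub>C k)" by (rule dle)
      also have "\<dots> = nsq L + 2 * Re (?c * ?b) + (cmod ?c)^2 * nsq k" by (rule nsq_expand)
      also have "Re (?c * ?b) = - s * (cmod ?b)^2"
        by (rule Re_neg_cnj_mult)
      also have "(cmod ?c)^2 = s^2 * (cmod ?b)^2"
        by (simp add: norm_mult power_mult_distrib)
      finally have "d \<le> nsq L - 2 * s * (cmod ?b)^2 + s^2 * (cmod ?b)^2 * nsq k" by simp
      moreover have "nsq L \<le> d"
      proof -
        have "(hnorm L)^2 \<le> (sqrt d)^2" using Lle hnorm_nonneg power_mono by blast
        then show ?thesis using d0 hnorm_sq[of L] by simp
      qed
      ultimately show ?thesis by linarith
    qed
    then have "\<And>s. 0 < s \<Longrightarrow> 0 \<le> 0 - 2 * s * (cmod ?b)^2 + s^2 * (cmod ?b)^2 * nsq k" by simp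
    from quad_zero[of 0 "(cmod ?b)^2" "nsq k", OF this _ nsq_nonneg] have "(cmod ?b)^2 \<le> 0" by simp
    then show ?thesis by simp
  qed
  have Lne: "L \<noteq> 0" using gL g0 by auto
  define n where "n = cinner L L"
  have nre: "n = complex_of_real (Re n)" unfolding n_def by (rule cinner_self_eq)
  have nne: "n \<noteq> 0" unfolding n_def using Lne cinner_self_zero by blast
  have key: "cinner L x = g x * n" for x
  proof -
    have "g (x - g x *\<^sub>C L) = 0" by (simp add: gdiff scal gL)
    then have "cinner L (x - g x *\<^sub>C L) = 0" by (rule orth)
    then show ?thesis by (simp add: cinner_diff_right cinner_scaleC_right n_def)
  qed
  show ?thesis
  proof (intro exI allI)
    fix x
    have "cinner ((1 / n) *\<^sub>C L) x = cnj (1/n) * cinner L x" by (rule cinner_scaleC_left)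
    also have "cnj (1/n) = 1/n" using nre by (metis complex_cnj_complex_of_real complex_cnj_divide complex_cnj_one)
    finally show "g x = cinner ((1 / n) *\<^sub>C L) x" using key nne by simp
  qed
qed



lemma adj_exists:
  assumes T: "T \<in> BH"
  shows "\<exists>S\<in>BH. \<forall>x y. cinner (T x) y = cinner x (S y)"
proof -
  obtain K where K: "K \<ge> 0" "\<And>x. hnorm (T x) \<le> K * hnorm x" using BH_bound[OF T] by blast
  have "\<exists>v. \<forall>x. cinner y (T x) = cinner v x" for y
  proof (rule riesz)
    show "cinner y (T (x + z)) = cinner y (T x) + cinner y (T z)" for x z
      by (simp add: BH_add[OF T] cinner_add_right)
    show "cinner y (T (c *\<^sub>C x)) = c * cinner y (T x)" for c x
      by (simp add: BH_scale[OF T] cinner_scaleC_right)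
    show "cmod (cinner y (T x)) \<le> (hnorm y * K) * hnorm x" for x
    proof -
      have "cmod (cinner y (T x)) \<le> hnorm y * hnorm (T x)" by (rule cinner_bound)
      also have "\<dots> \<le> hnorm y * (K * hnorm x)" using K(2)[of x] hnorm_nonneg[of y] by (rule mult_left_mono)
      finally show ?thesis by (simp add: mult.assoc)
    qed
  qed
  then obtain S where S: "\<And>y x. cinner y (T x) = cinner (S y) x" by metis
  have adjp: "cinner (T x) y = cinner x (S y)" for x y
    by (metis S cinner_conj_sym)
  have Sadd: "S (y + z) = S y + S z" for y z
    by (rule cinner_ext_left) (simp add: S[symmetric] cinner_add_left)
  have Sscale: "S (c *\<^sub>C y) = c *\<^sub>C S y" for c y
    by (rule cinner_ext_left) (simp add: S[symmetric] cinner_scaleC_left)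
  have Sbd: "hnorm (S y) \<le> K * hnorm y" for y
  proof -
    have "(hnorm (S y))^2 = Re (cinner y (T (S y)))" by (simp add: hnorm_sq nsq_def S)
    also have "\<dots> \<le> cmod (cinner y (T (S y)))" by (rule complex_Re_le_cmod)
    also have "\<dots> \<le> hnorm y * hnorm (T (S y))" by (rule cinner_bound)
    also have "\<dots> \<le> hnorm y * (K * hnorm (S y))" using K(2)[of "S y"] hnorm_nonneg[of y] by (rule mult_left_mono)
    finally have h: "hnorm (S y) * hnorm (S y) \<le> (K * hnorm y) * hnorm (S y)"
      by (simp add: power2_eq_square algebra_simps)
    show ?thesis
    proof (cases "hnorm (S y) = 0")
      case True then show ?thesis using K(1) hnorm_nonneg[of y] by simp
    next
      case False
      then have "hnorm (S y) > 0" using hnorm_nonneg by (simp add: order_less_le)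
      then show ?thesis using h by simp
    qed
  qed
  have "S \<in> BH" unfolding BH_def using Sadd Sscale Sbd by blast
  then show ?thesis using adjp by blast
qed

lemma adj_prop: "T \<in> BH \<Longrightarrow> adj T \<in> BH \<and> (\<forall>x y. cinner (T x) y = cinner x (adj T y))"
proof -
  assume "T \<in> BH"
  then have "\<exists>S. S \<in> BH \<and> (\<forall>x y. cinner (T x) y = cinner x (S y))" using adj_exists by blast
  then show ?thesis unfolding adj_def by (rule someI_ex)
qed

lemma adj_BH: "T \<in> BH \<Longrightarrow> adj T \<in> BH"
  using adj_prop by blast

lemma adj_right: "T \<in> BH \<Longrightarrow> cinner (T x) y = cinner x (adj T y)"
  using adj_prop by blast

lemma adj_left: "T \<in> BH \<Longrightarrow> cinner x (T y) = cinner (adj T x) y"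
  by (metis adj_right cinner_conj_sym)

lemma Ad_apply: "Ad a T h = a (T (adj a h))" by (simp add: Ad_def)

lemma Ad_BH: "a \<in> BH \<Longrightarrow> T \<in> BH \<Longrightarrow> Ad a T \<in> BH"
  unfolding Ad_def by (intro BH_comp adj_BH)

lemma pos_Ad:
  assumes cp: "completely_positive \<Psi>" and a: "a \<in> BH" and X: "pos_matA k X"
  shows "pos_matB k (\<lambda>p q. Ad a (\<Psi> (X p q)))"
  unfolding pos_matB_def
proof
  fix \<xi> :: "nat \<Rightarrow> 'b"
  have P: "pos_matB k (\<lambda>p q. \<Psi> (X p q))" using cp X by (simp add: completely_positive_def)
  have "(\<Sum>i<k. \<Sum>j<k. cinner (\<xi> i) (Ad a (\<Psi> (X i j)) (\<xi> j)))
      = (\<Sum>i<k. \<Sum>j<k. cinner (adj a (\<xi> i)) (\<Psi> (X i j) (adj a (\<xi> j))))"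
    by (simp add: Ad_apply adj_left[OF a])
  then show "Im (\<Sum>i<k. \<Sum>j<k. cinner (\<xi> i) (Ad a (\<Psi> (X i j)) (\<xi> j))) = 0 \<and>
        0 \<le> Re (\<Sum>i<k. \<Sum>j<k. cinner (\<xi> i) (Ad a (\<Psi> (X i j)) (\<xi> j)))"
    using P[unfolded pos_matB_def, rule_format, of "\<lambda>i. adj a (\<xi> i)"] by simp
qed

lemma pos_sum:
  assumes "\<And>i. i \<in> I \<Longrightarrow> pos_matB k (T i)" "finite I"
  shows "pos_matB k (\<lambda>p q h. \<Sum>i\<in>I. T i p q h)"
  unfolding pos_matB_def
proof
  fix \<xi> :: "nat \<Rightarrow> 'b"
  have eq: "(\<Sum>p<k. \<Sum>q<k. cinner (\<xi> p) (\<Sum>i\<in>I. T i p q (\<xi> q)))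
      = (\<Sum>i\<in>I. \<Sum>p<k. \<Sum>q<k. cinner (\<xi> p) (T i p q (\<xi> q)))"
  proof -
    have "(\<Sum>p<k. \<Sum>q<k. cinner (\<xi> p) (\<Sum>i\<in>I. T i p q (\<xi> q)))
        = (\<Sum>p<k. \<Sum>q<k. \<Sum>i\<in>I. cinner (\<xi> p) (T i p q (\<xi> q)))"
      by (simp only: cinner_sum_right)
    also have "\<dots> = (\<Sum>p<k. \<Sum>i\<in>I. \<Sum>q<k. cinner (\<xi> p) (T i p q (\<xi> q)))"
      by (rule sum.cong[OF refl], rule sum.swap)
    also have "\<dots> = (\<Sum>i\<in>I. \<Sum>p<k. \<Sum>q<k. cinner (\<xi> p) (T i p q (\<xi> q)))"
      by (rule sum.swap)
    finally show ?thesis .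
  qed
  have "\<forall>i\<in>I. Im (\<Sum>p<k. \<Sum>q<k. cinner (\<xi> p) (T i p q (\<xi> q))) = 0 \<and>
      0 \<le> Re (\<Sum>p<k. \<Sum>q<k. cinner (\<xi> p) (T i p q (\<xi> q)))"
    using assms(1) unfolding pos_matB_def by blast
  then show "Im (\<Sum>p<k. \<Sum>q<k. cinner (\<xi> p) (\<Sum>i\<in>I. T i p q (\<xi> q))) = 0 \<and>
        0 \<le> Re (\<Sum>p<k. \<Sum>q<k. cinner (\<xi> p) (\<Sum>i\<in>I. T i p q (\<xi> q)))"
    unfolding eq by (simp add: Im_sum Re_sum sum_nonneg)
qed

lemma lin_add: "linear_map_BH \<Psi> \<Longrightarrow> \<Psi> (x + y) h = \<Psi> x h + \<Psi> y h"
  by (simp add: linear_map_BH_def)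
lemma lin_scale: "linear_map_BH \<Psi> \<Longrightarrow> \<Psi> (c *\<^sub>C x) h = c *\<^sub>C \<Psi> x h"
  by (simp add: linear_map_BH_def)
lemma lin_BH: "linear_map_BH \<Psi> \<Longrightarrow> \<Psi> x \<in> BH"
  by (simp add: linear_map_BH_def)
lemma lin_zero: "linear_map_BH \<Psi> \<Longrightarrow> \<Psi> 0 h = 0"
  using lin_scale[of \<Psi> 0 0 h] by simp
lemma lin_sum: "linear_map_BH \<Psi> \<Longrightarrow> \<Psi> (\<Sum>i\<in>I. f i) h = (\<Sum>i\<in>I. \<Psi> (f i) h)"
  by (induction I rule: infinite_finite_induct) (auto simp: lin_add lin_zero)

lemma op_comb_CP:
  assumes a: "a \<in> FOP m" and \<Psi>: "\<And>i. i < m \<Longrightarrow> completely_positive (\<Psi> i)"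
  shows "completely_positive (op_comb m a \<Psi>)"
proof -
  have aBH: "a i \<in> BH" if "i < m" for i using a that by (simp add: FOP_def)
  have lin: "linear_map_BH (\<Psi> i)" if "i < m" for i using \<Psi>[OF that] by (simp add: completely_positive_def)
  have "linear_map_BH (op_comb m a \<Psi>)"
    unfolding linear_map_BH_def
  proof (intro conjI allI)
    show "op_comb m a \<Psi> x \<in> BH" for x
      unfolding op_comb_def by (rule BH_sum_fun) (simp add: Ad_BH aBH lin_BH lin)
    show "op_comb m a \<Psi> (x + y) = (\<lambda>h. op_comb m a \<Psi> x h + op_comb m a \<Psi> y h)" for x y
      unfolding op_comb_def
      by (auto simp: Ad_apply lin_add lin BH_add aBH sum.distrib[symmetric] intro!: sum.cong)
    show "op_comb m a \<Psi> (c *\<^sub>C x) = (\<lambda>h. c *\<^sub>C op_comb m a \<Psi> x h)" for c x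
      unfolding op_comb_def
      by (auto simp: Ad_apply lin_scale lin BH_scale aBH scaleC_sum intro!: sum.cong)
  qed
  moreover have "pos_matB k (\<lambda>i j. op_comb m a \<Psi> (X i j))" if "pos_matA k X" for k X
    unfolding op_comb_def
    by (rule pos_sum) (auto simp: pos_Ad \<Psi> aBH that)
  ultimately show ?thesis by (simp add: completely_positive_def)
qed

lemma CP_op_convex: "op_convex CP_maps"
  unfolding op_convex_def CP_maps_def using op_comb_CP by blast

lemma hull_sub_CP: "op_convex_hull CP_maps \<subseteq> CP_maps"
  unfolding op_convex_hull_def using CP_op_convex by blast

lemma CP_sub_hull: "CP_maps \<subseteq> op_convex_hull CP_maps"
  unfolding op_convex_hull_def by blast



lemma cstar_one: "cstar (1::'a::cstar_algebra) = 1"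
proof -
  have "cstar (1::'a) = cstar 1 * cstar (cstar 1)" by (simp only: cstar_cstar mult_1_right)
  also have "\<dots> = cstar (cstar 1 * 1)" by (rule cstar_mult[symmetric])
  also have "\<dots> = 1" by (simp add: cstar_cstar)
  finally show ?thesis .
qed

lemma hom_CP:
  assumes hom: "unital_star_hom \<Phi>"
  shows "completely_positive \<Phi>"
proof -
  have lin: "linear_map_BH \<Phi>" and mult: "\<And>x y. \<Phi> (x * y) = \<Phi> x \<circ> \<Phi> y"
    and star: "\<And>x. \<Phi> (cstar x) = adj (\<Phi> x)" using hom by (auto simp: unital_star_hom_def)
  have "pos_matB k (\<lambda>i j. \<Phi> (X i j))" if XA: "pos_matA k X" for k X
  proof -
    obtain Y where Y: "\<And>i j. i < k \<Longrightarrow> j < k \<Longrightarrow> X i j = (\<Sum>l<k. cstar (Y l i) * Y l j)"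
      using XA unfolding pos_matA_def by blast
    show ?thesis unfolding pos_matB_def
    proof
      fix \<xi> :: "nat \<Rightarrow> 'b"
      define w where "w l i = \<Phi> (Y l i) (\<xi> i)" for l i
      have "(\<Sum>i<k. \<Sum>j<k. cinner (\<xi> i) (\<Phi> (X i j) (\<xi> j)))
          = (\<Sum>i<k. \<Sum>j<k. \<Sum>l<k. cinner (w l i) (w l j))"
      proof (intro sum.cong refl)
        fix i j assume "i \<in> {..<k}" "j \<in> {..<k}"
        then have "\<Phi> (X i j) (\<xi> j) = (\<Sum>l<k. \<Phi> (cstar (Y l i) * Y l j) (\<xi> j))"
          using Y by (simp add: lin_sum[OF lin])
        also have "\<dots> = (\<Sum>l<k. adj (\<Phi> (Y l i)) (w l j))"
          by (simp add: mult star w_def)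
        finally show "cinner (\<xi> i) (\<Phi> (X i j) (\<xi> j)) = (\<Sum>l<k. cinner (w l i) (w l j))"
          by (simp add: cinner_sum_right adj_right[OF lin_BH[OF lin], symmetric] w_def)
      qed
      also have "\<dots> = (\<Sum>i<k. \<Sum>l<k. \<Sum>j<k. cinner (w l i) (w l j))"
        by (rule sum.cong[OF refl], rule sum.swap)
      also have "\<dots> = (\<Sum>l<k. \<Sum>i<k. \<Sum>j<k. cinner (w l i) (w l j))"
        by (rule sum.swap)
      also have "\<dots> = (\<Sum>l<k. cinner (\<Sum>i<k. w l i) (\<Sum>j<k. w l j))"
      proof (rule sum.cong[OF refl])
        fix l
        show "(\<Sum>i<k. \<Sum>j<k. cinner (w l i) (w l j)) = cinner (\<Sum>i<k. w l i) (\<Sum>j<k. w l j)"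
          unfolding cinner_sum_left by (simp only: cinner_sum_right)
      qed
      finally have eq: "(\<Sum>i<k. \<Sum>j<k. cinner (\<xi> i) (\<Phi> (X i j) (\<xi> j))) = (\<Sum>l<k. cinner (\<Sum>i<k. w l i) (\<Sum>j<k. w l j))" .
      show "Im (\<Sum>i<k. \<Sum>j<k. cinner (\<xi> i) (\<Phi> (X i j) (\<xi> j))) = 0 \<and>
          0 \<le> Re (\<Sum>i<k. \<Sum>j<k. cinner (\<xi> i) (\<Phi> (X i j) (\<xi> j)))"
        unfolding eq by (simp add: Im_sum Re_sum cinner_self_real cinner_self_nonneg sum_nonneg)
    qed
  qed
  then show ?thesis using lin by (simp add: completely_positive_def)
qed

definition Q4 :: "('a::cstar_algebra \<Rightarrow> 'h \<Rightarrow> 'h::chilbert) \<Rightarrow> 'a \<Rightarrow> 'h \<Rightarrow> 'h \<Rightarrow> complex" where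
  "Q4 F x \<xi> \<zeta> = cinner \<xi> (F (cstar x * x) \<xi>) + cinner \<xi> (F (cstar x * 1) \<zeta>)
     + cinner \<zeta> (F (cstar 1 * x) \<xi>) + cinner \<zeta> (F (cstar 1 * 1) \<zeta>)"

definition Y2 :: "'a::cstar_algebra \<Rightarrow> nat \<Rightarrow> nat \<Rightarrow> 'a" where
  "Y2 x l p = (if l = 0 then (if p = 0 then x else 1) else 0)"

definition X2 :: "'a::cstar_algebra \<Rightarrow> nat \<Rightarrow> nat \<Rightarrow> 'a" where
  "X2 x p q = (\<Sum>l<2. cstar (Y2 x l p) * Y2 x l q)"

lemma X2_pos: "pos_matA 2 (X2 x)"
  unfolding pos_matA_def X2_def by blast

lemma Q4_pos:
  assumes "pos_matB 2 (\<lambda>p q. F (X2 x p q))"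
  shows "Im (Q4 F x \<xi> \<zeta>) = 0 \<and> 0 \<le> Re (Q4 F x \<xi> \<zeta>)"
proof -
  define v where "v p = (if p = 0 then \<xi> else \<zeta>)" for p :: nat
  have "(\<Sum>p<2. \<Sum>q<2. cinner (v p) (F (X2 x p q) (v q))) = Q4 F x \<xi> \<zeta>"
    by (simp add: numeral_2_eq_2 v_def X2_def Y2_def Q4_def)
  then show ?thesis using assms[unfolded pos_matB_def, rule_format, of v] by simp
qed

lemma Q4_sum: "Q4 (\<lambda>y h. \<Sum>i\<in>I. F i y h) x \<xi> \<zeta> = (\<Sum>i\<in>I. Q4 (F i) x \<xi> \<zeta>)"
  by (simp add: Q4_def cinner_sum_right sum.distrib)

lemma Q4_hom:
  assumes hom: "unital_star_hom \<Phi>"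
  shows "Q4 \<Phi> x \<xi> (- \<Phi> x \<xi>) = 0"
proof -
  have lin: "linear_map_BH \<Phi>" and mult: "\<And>x y. \<Phi> (x * y) = \<Phi> x \<circ> \<Phi> y"
    and star: "\<And>x. \<Phi> (cstar x) = adj (\<Phi> x)" and one: "\<Phi> 1 = id"
    using hom by (auto simp: unital_star_hom_def)
  have ar: "cinner u (adj (\<Phi> y) v) = cinner (\<Phi> y u) v" for y u v
    using adj_right[OF lin_BH[OF lin]] by metis
  define w where "w = \<Phi> x \<xi>"
  have "Q4 \<Phi> x \<xi> (- w) = cinner w w + cinner w (- w) + cinner (- w) w + cinner (- w) (- w)"
    unfolding Q4_def by (simp add: mult star ar one w_def cstar_one)
  also have "\<dots> = 0" by (simp add: cinner_minus_left cinner_minus_right)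
  finally show ?thesis by (simp add: w_def)
qed

lemma real_lin_nonneg:
  fixes a b :: real
  assumes "\<And>s. 0 \<le> s * a + s^2 * b"
  shows "a = 0"
proof (rule ccontr)
  assume a: "a \<noteq> 0"
  define c where "c = \<bar>b\<bar> + 1"
  have c: "c > 0" "b \<le> c" by (auto simp: c_def)
  define s where "s = - a / (2 * c)"
  have "s^2 * b \<le> s^2 * c" using c by (intro mult_left_mono) auto
  moreover have "s^2 * c = a^2 / (4 * c)" using c by (simp add: s_def field_simps power2_eq_square)
  moreover have "s * a = - (a^2 / (2 * c))" using c by (simp add: s_def field_simps power2_eq_square)
  moreover have "a^2 / (4 * c) > 0" using a c by simp
  moreover have "a^2 / (2 * c) = 2 * (a^2 / (4 * c))" by (simp add: field_simps)
  ultimately have "s * a + s^2 * b < 0" by linarith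
  then show False using assms[of s] by simp
qed

lemma real_lin_zero:
  fixes a b :: real
  assumes "\<And>s. s * a + s^2 * b = 0"
  shows "a = 0"
  using assms[of 1] assms[of "-1"] by simp



lemma core_gen:
  fixes \<Theta> :: "'a::cstar_algebra \<Rightarrow> 'h::chilbert \<Rightarrow> 'h"
  assumes hom: "unital_star_hom \<Phi>"
    and TBH: "\<And>y. \<Theta> y \<in> BH"
    and pos: "\<And>x \<xi> \<zeta>. Im (Q4 \<Theta> x \<xi> \<zeta>) = 0 \<and> 0 \<le> Re (Q4 \<Theta> x \<xi> \<zeta>)"
    and up: "\<And>x \<xi>. Re (Q4 \<Theta> x \<xi> (- \<Phi> x \<xi>)) \<le> 0"
  shows "cinner \<eta> (\<Theta> x \<xi>) = cinner \<eta> (\<Theta> 1 (\<Phi> x \<xi>)) \<and>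
         cinner \<xi> (\<Theta> (cstar x) \<eta>) = cinner \<xi> (\<Phi> (cstar x) (\<Theta> 1 \<eta>))"
proof -
  have lin: "linear_map_BH \<Phi>" and star: "\<And>x. \<Phi> (cstar x) = adj (\<Phi> x)"
    using hom by (auto simp: unital_star_hom_def)
  define \<rho> where "\<rho> = - \<Phi> x \<xi>"
  define Q0 where "Q0 = Q4 \<Theta> x \<xi> \<rho>"
  define \<alpha> where "\<alpha> = cinner \<xi> (\<Theta> (cstar x) \<eta>) + cinner \<rho> (\<Theta> 1 \<eta>)"
  define \<beta> where "\<beta> = cinner \<eta> (\<Theta> x \<xi>) + cinner \<eta> (\<Theta> 1 \<rho>)"
  define \<gamma> where "\<gamma> = cinner \<eta> (\<Theta> 1 \<eta>)"
  have expand: "Q4 \<Theta> x \<xi> (\<rho> + t *\<^sub>C \<eta>) = Q0 + t * \<alpha> + cnj t * \<beta> + (cnj t * t) * \<gamma>" for t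
    unfolding Q0_def Q4_def \<alpha>_def \<beta>_def \<gamma>_def
    by (simp add: cstar_one BH_add[OF TBH] BH_scale[OF TBH] cinner_add_left cinner_add_right
        cinner_scaleC_left cinner_scaleC_right algebra_simps)
  have "Q0 = 0"
  proof -
    have "Im Q0 = 0" "0 \<le> Re Q0" using pos unfolding Q0_def by auto
    moreover have "Re Q0 \<le> 0" using up unfolding Q0_def \<rho>_def by auto
    ultimately show ?thesis by (simp add: complex_eq_iff)
  qed
  note ex = expand[unfolded \<open>Q0 = 0\<close>]
  have r1: "Re (\<alpha> + \<beta>) = 0"
  proof (rule real_lin_nonneg[where b = "Re \<gamma>"])
    fix s :: real
    have "0 \<le> Re (Q4 \<Theta> x \<xi> (\<rho> + complex_of_real s *\<^sub>C \<eta>))" using pos by blast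
    then show "0 \<le> s * Re (\<alpha> + \<beta>) + s^2 * Re \<gamma>"
      unfolding ex by (simp add: power2_eq_square algebra_simps)
  qed
  have i1: "Im (\<alpha> + \<beta>) = 0"
  proof (rule real_lin_zero[where b = "Im \<gamma>"])
    fix s :: real
    have "0 = Im (Q4 \<Theta> x \<xi> (\<rho> + complex_of_real s *\<^sub>C \<eta>))" using pos by simp
    then show "s * Im (\<alpha> + \<beta>) + s^2 * Im \<gamma> = 0"
      unfolding ex by (simp add: power2_eq_square algebra_simps)
  qed
  have i2: "- Im (\<alpha> - \<beta>) = 0"
  proof (rule real_lin_nonneg[where b = "Re \<gamma>"])
    fix s :: real
    have "0 \<le> Re (Q4 \<Theta> x \<xi> (\<rho> + (\<i> * complex_of_real s) *\<^sub>C \<eta>))" using pos by blast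
    then show "0 \<le> s * - Im (\<alpha> - \<beta>) + s^2 * Re \<gamma>"
      unfolding ex by (simp add: power2_eq_square algebra_simps)
  qed
  have r2: "Re (\<alpha> - \<beta>) = 0"
  proof (rule real_lin_zero[where b = "Im \<gamma>"])
    fix s :: real
    have "0 = Im (Q4 \<Theta> x \<xi> (\<rho> + (\<i> * complex_of_real s) *\<^sub>C \<eta>))" using pos by simp
    then show "s * Re (\<alpha> - \<beta>) + s^2 * Im \<gamma> = 0"
      unfolding ex by (simp add: power2_eq_square algebra_simps)
  qed
  have "\<alpha> + \<beta> = 0" "\<alpha> - \<beta> = 0" using r1 i1 r2 i2 by (auto simp: complex_eq_iff)
  then have ab: "\<alpha> = 0" "\<beta> = 0" by (auto simp: algebra_simps)
  have "cinner \<eta> (\<Theta> 1 \<rho>) = - cinner \<eta> (\<Theta> 1 (\<Phi> x \<xi>))"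
    unfolding \<rho>_def by (simp add: BH_minus[OF TBH] cinner_minus_right)
  then have g1: "cinner \<eta> (\<Theta> x \<xi>) = cinner \<eta> (\<Theta> 1 (\<Phi> x \<xi>))"
    using ab(2) unfolding \<beta>_def by (simp add: add_eq_0_iff)
  have "cinner \<rho> (\<Theta> 1 \<eta>) = - cinner \<xi> (\<Phi> (cstar x) (\<Theta> 1 \<eta>))"
    unfolding \<rho>_def star by (simp add: cinner_minus_left adj_right[OF lin_BH[OF lin]])
  then have g2: "cinner \<xi> (\<Theta> (cstar x) \<eta>) = cinner \<xi> (\<Phi> (cstar x) (\<Theta> 1 \<eta>))"
    using ab(1) unfolding \<alpha>_def by (simp add: add_eq_0_iff)
  show ?thesis using g1 g2 by blast
qed



lemma core:
  fixes \<Theta> :: "'a::cstar_algebra \<Rightarrow> 'h::chilbert \<Rightarrow> 'h"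
  assumes hom: "unital_star_hom \<Phi>"
    and TBH: "\<And>y. \<Theta> y \<in> BH"
    and pos: "\<And>x \<xi> \<zeta>. Im (Q4 \<Theta> x \<xi> \<zeta>) = 0 \<and> 0 \<le> Re (Q4 \<Theta> x \<xi> \<zeta>)"
    and up: "\<And>x \<xi>. Re (Q4 \<Theta> x \<xi> (- \<Phi> x \<xi>)) \<le> 0"
  shows "\<Theta> x = \<Theta> 1 \<circ> \<Phi> x \<and> \<Theta> x = \<Phi> x \<circ> \<Theta> 1"
proof
  note cg = core_gen[OF hom TBH pos up]
  show "\<Theta> x = \<Theta> 1 \<circ> \<Phi> x"
  proof
    fix \<xi> show "\<Theta> x \<xi> = (\<Theta> 1 \<circ> \<Phi> x) \<xi>"
      using cg by (auto intro: cinner_ext_right)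
  qed
  show "\<Theta> x = \<Phi> x \<circ> \<Theta> 1"
  proof
    fix \<eta> show "\<Theta> x \<eta> = (\<Phi> x \<circ> \<Theta> 1) \<eta>"
      using cg[of _ "cstar x"] by (auto simp: cstar_cstar intro: cinner_ext_right)
  qed
qed

theorem mainTheorem2:
  fixes \<Phi> :: "'a::cstar_algebra \<Rightarrow> ('h::chilbert \<Rightarrow> 'h)"
  assumes "unital_star_hom \<Phi>"
  shows "op_extreme (op_convex_hull (CP_maps :: ('a \<Rightarrow> ('h \<Rightarrow> 'h)) set)) \<Phi>"
proof -
  note hom = assms
  have lin: "linear_map_BH \<Phi>" using hom by (simp add: unital_star_hom_def)
  have "\<Phi> \<in> CP_maps" using hom_CP[OF hom] by (simp add: CP_maps_def)
  then have inhull: "\<Phi> \<in> op_convex_hull CP_maps" using CP_sub_hull by blast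
  have rest: "\<exists>z. \<forall>i<m. z i \<in> commutant_range \<Phi> \<and>
               (\<lambda>x. Ad (a i) (\<Psi> i x)) = (\<lambda>x. z i \<circ> \<Phi> x)"
    if a: "a \<in> FOP m" and \<Psi>: "\<forall>i<m. \<Psi> i \<in> op_convex_hull CP_maps" and eq: "\<Phi> = op_comb m a \<Psi>"
    for m a and \<Psi> :: "nat \<Rightarrow> 'a \<Rightarrow> 'h \<Rightarrow> 'h"
  proof -
    have CPi: "completely_positive (\<Psi> i)" if "i < m" for i
      using \<Psi> that hull_sub_CP by (auto simp: CP_maps_def)
    have aBH: "a i \<in> BH" if "i < m" for i using a that by (simp add: FOP_def)
    have TBH: "Ad (a i) (\<Psi> i y) \<in> BH" if "i < m" for i y
      using CPi[OF that] aBH[OF that] by (simp add: Ad_BH lin_BH completely_positive_def)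
    have posi: "Im (Q4 (\<lambda>y. Ad (a i) (\<Psi> i y)) x \<xi> \<zeta>) = 0 \<and> 0 \<le> Re (Q4 (\<lambda>y. Ad (a i) (\<Psi> i y)) x \<xi> \<zeta>)"
      if "i < m" for i x \<xi> \<zeta>
      by (rule Q4_pos, rule pos_Ad[OF CPi[OF that] aBH[OF that] X2_pos])
    have sumeq: "Q4 \<Phi> x \<xi> w = (\<Sum>j<m. Q4 (\<lambda>y. Ad (a j) (\<Psi> j y)) x \<xi> w)" for x \<xi> w
      unfolding eq op_comb_def by (rule Q4_sum)
    define z where "z i = Ad (a i) (\<Psi> i 1)" for i
    show ?thesis
    proof (intro exI[of _ z] allI impI)
      fix i assume i: "i < m"
      have up: "Re (Q4 (\<lambda>y. Ad (a i) (\<Psi> i y)) x \<xi> (- \<Phi> x \<xi>)) \<le> 0" for x \<xi>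
      proof -
        have "Re (Q4 (\<lambda>y. Ad (a i) (\<Psi> i y)) x \<xi> (- \<Phi> x \<xi>))
            \<le> (\<Sum>j<m. Re (Q4 (\<lambda>y. Ad (a j) (\<Psi> j y)) x \<xi> (- \<Phi> x \<xi>)))"
          by (rule member_le_sum) (use i posi in auto)
        also have "\<dots> = Re (Q4 \<Phi> x \<xi> (- \<Phi> x \<xi>))" by (simp add: sumeq Re_sum)
        also have "\<dots> = 0" by (simp add: Q4_hom[OF hom])
        finally show ?thesis .
      qed
      have c: "Ad (a i) (\<Psi> i x) = z i \<circ> \<Phi> x \<and> Ad (a i) (\<Psi> i x) = \<Phi> x \<circ> z i" for x
        unfolding z_def by (rule core[OF hom TBH[OF i] posi[OF i] up])
      have zb: "z i \<in> BH" unfolding z_def by (rule TBH[OF i])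
      have comm: "\<forall>x. z i \<circ> \<Phi> x = \<Phi> x \<circ> z i"
      proof
        fix x
        from c[of x] have "Ad (a i) (\<Psi> i x) = z i \<circ> \<Phi> x" "Ad (a i) (\<Psi> i x) = \<Phi> x \<circ> z i" by auto
        then show "z i \<circ> \<Phi> x = \<Phi> x \<circ> z i" by simp
      qed
      have feq: "(\<lambda>x. Ad (a i) (\<Psi> i x)) = (\<lambda>x. z i \<circ> \<Phi> x)"
      proof
        fix x show "Ad (a i) (\<Psi> i x) = z i \<circ> \<Phi> x" using c[of x] by (elim conjE)
      qed
      show "z i \<in> commutant_range \<Phi> \<and> (\<lambda>x. Ad (a i) (\<Psi> i x)) = (\<lambda>x. z i \<circ> \<Phi> x)"
        unfolding commutant_range_def using zb comm feq by blast
    qed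
  qed
  show ?thesis unfolding op_extreme_def using inhull rest by blast
qed


end
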